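(* Let $m,n\geq 2$ and let $V$ be the vertex set of $K_m\Box K_n$. If $S$ is a $\{2\}$-resolving set of $K_m\Box K_n$, then (1) there is a vertex $v\in V$ such that $\{v\}\cup(V\setminus N(v))\subseteq S$, or (2) every row and every column of $K_m\Box K_n$ contains at least two elements of $S$ and every quadruple contains at least one element of $S$.
   Context: $K_m\Box K_n$ has vertices $av$ with $a\in V(K_m)$, $v\in V(K_n)$; distinct $av,bu$ are adjacent iff $a=b$ or $u=v$. A column is a set $\{au: u\in V(K_n)\}$ for fixed $a\in V(K_m)$; a row is a set $\{au: a\in V(K_m)\}$ for fixed $u\in V(K_n)$. A quadruple is a set $\{av,au,bv,bu\}$ with $a\neq b$, $u\neq v$. $N(v)$ is the set of neighbours of $v$. $d$ is the shortest-path distance, $d(s,X)=\min_{x\in X}d(s,x)$, $\mathcal{D}_S(X)=(d(s_1,X),\dots,d(s_k,X))$ for $S=\{s_1,\dots,s_k\}$. $S$ is a $\{2\}$-resolving set if $\mathcal{D}_S(X)\neq\mathcal{D}_S(Y)$ for all distinct nonempty vertex sets $X,Y$ with $|X|,|Y|\leq 2$. *)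

theory Defs
  imports Main
begin

text \<open>The rook's graph K_m \<box> K_n. Vertex (a,v) stands for av, with a in V(K_m) = {0..<m}
  and v in V(K_n) = {0..<n}.\<close>

definition rV :: "nat \<Rightarrow> nat \<Rightarrow> (nat \<times> nat) set" where
  "rV m n = {0..<m} \<times> {0..<n}"

definition radj :: "nat \<Rightarrow> nat \<Rightarrow> nat \<times> nat \<Rightarrow> nat \<times> nat \<Rightarrow> bool" where
  "radj m n x y \<longleftrightarrow> x \<in> rV m n \<and> y \<in> rV m n \<and> x \<noteq> y \<and> (fst x = fst y \<or> snd x = snd y)"

definition redges :: "nat \<Rightarrow> nat \<Rightarrow> ((nat \<times> nat) \<times> (nat \<times> nat)) set" where
  "redges m n = {(x, y). radj m n x y}"

definition rdist :: "nat \<Rightarrow> nat \<Rightarrow> nat \<times> nat \<Rightarrow> nat \<times> nat \<Rightarrow> nat" where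
  "rdist m n x y = (LEAST k. (x, y) \<in> redges m n ^^ k)"

definition rnbhd :: "nat \<Rightarrow> nat \<Rightarrow> nat \<times> nat \<Rightarrow> (nat \<times> nat) set" where
  "rnbhd m n v = {u. radj m n v u}"

definition rsetdist :: "nat \<Rightarrow> nat \<Rightarrow> nat \<times> nat \<Rightarrow> (nat \<times> nat) set \<Rightarrow> nat" where
  "rsetdist m n s X = Min ((\<lambda>x. rdist m n s x) ` X)"

text \<open>D_S(X) = D_S(Y) iff d(s,X) = d(s,Y) for every s in S.\<close>
definition two_resolving :: "nat \<Rightarrow> nat \<Rightarrow> (nat \<times> nat) set \<Rightarrow> bool" where
  "two_resolving m n S \<longleftrightarrow> S \<subseteq> rV m n \<and>
     (\<forall>X Y. X \<subseteq> rV m n \<and> Y \<subseteq> rV m n \<and> X \<noteq> {} \<and> Y \<noteq> {} \<and> card X \<le> 2 \<and> card Y \<le> 2 \<and> X \<noteq> Y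
        \<longrightarrow> (\<exists>s\<in>S. rsetdist m n s X \<noteq> rsetdist m n s Y))"

definition rcolumn :: "nat \<Rightarrow> nat \<Rightarrow> (nat \<times> nat) set" where
  "rcolumn n a = {(a, u) | u. u < n}"

definition rrow :: "nat \<Rightarrow> nat \<Rightarrow> (nat \<times> nat) set" where
  "rrow m u = {(a, u) | a. a < m}"

end

theory Submission
  imports Defs
begin

definition dd :: "nat \<times> nat \<Rightarrow> nat \<times> nat \<Rightarrow> nat" where
  "dd x y = (if x = y then 0 else if fst x = fst y \<or> snd x = snd y then 1 else 2)"

lemma dd_simp: "dd (p, q) (c, w) = (if p = c \<and> q = w then 0 else if p = c \<or> q = w then 1 else 2)"
  by (simp add: dd_def)

lemma rdist_eq:
  assumes "x \<in> rV m n" "y \<in> rV m n"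
  shows "rdist m n x y = dd x y"
proof -
  have P0: "(x, y) \<in> redges m n ^^ 0 \<longleftrightarrow> x = y" by simp
  have P1: "(x, y) \<in> redges m n ^^ 1 \<longleftrightarrow> radj m n x y" by (simp add: redges_def)
  show ?thesis
  proof (cases "x = y")
    case True
    then show ?thesis unfolding rdist_def dd_def by (simp add: Least_eq_0)
  next
    case ne: False
    show ?thesis
    proof (cases "fst x = fst y \<or> snd x = snd y")
      case True
      then have "radj m n x y" using assms ne by (simp add: radj_def)
      then have "(LEAST k. (x, y) \<in> redges m n ^^ k) = 1"
      proof (intro Least_equality)
        show "(x, y) \<in> redges m n ^^ 1" using P1 \<open>radj m n x y\<close> by simp
      next
        fix k assume "(x, y) \<in> redges m n ^^ k"
        then show "1 \<le> k" using ne by (cases k) auto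
      qed
      then show ?thesis unfolding rdist_def dd_def using True ne by simp
    next
      case False
      obtain a u where x: "x = (a, u)" by fastforce
      obtain b v where y: "y = (b, v)" by fastforce
      have z: "(a, v) \<in> rV m n" using assms x y by (auto simp: rV_def)
      have "(x, (a, v)) \<in> redges m n" "((a, v), y) \<in> redges m n"
        using assms z False x y by (auto simp: redges_def radj_def)
      then have "(x, y) \<in> redges m n ^^ 2"
        by (auto simp: numeral_2_eq_2 relpow_Suc_I)
      moreover have "\<not> radj m n x y" using False by (simp add: radj_def)
      ultimately have "(LEAST k. (x, y) \<in> redges m n ^^ k) = 2"
        using P0 P1 ne apply (intro Least_equality) apply simp
        by (metis One_nat_def less_2_cases not_le_imp_less)
      then show ?thesis unfolding rdist_def dd_def using False ne by simp
    qed
  qed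
qed

lemma sd1: assumes "s \<in> rV m n" "x \<in> rV m n" shows "rsetdist m n s {x} = dd s x"
  unfolding rsetdist_def using rdist_eq[OF assms] by simp

lemma sd2: assumes "s \<in> rV m n" "x \<in> rV m n" "y \<in> rV m n" shows "rsetdist m n s {x, y} = min (dd s x) (dd s y)"
proof -
  have "(\<lambda>x. rdist m n s x) ` {x, y} = {dd s x, dd s y}" using rdist_eq[OF assms(1,2)] rdist_eq[OF assms(1,3)] by simp
  then show ?thesis unfolding rsetdist_def by simp
qed

lemma use_res:
  assumes "two_resolving m n S" "X \<subseteq> rV m n" "Y \<subseteq> rV m n" "X \<noteq> {}" "Y \<noteq> {}"
    "card X \<le> 2" "card Y \<le> 2" "X \<noteq> Y"
  shows "\<exists>s\<in>S. s \<in> rV m n \<and> rsetdist m n s X \<noteq> rsetdist m n s Y"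
proof -
  have "\<exists>s\<in>S. rsetdist m n s X \<noteq> rsetdist m n s Y"
    using assms(1) assms(2-) unfolding two_resolving_def by (elim conjE allE impE) simp_all
  moreover have "S \<subseteq> rV m n" using assms(1) unfolding two_resolving_def by simp
  ultimately show ?thesis by blast
qed

lemma col_eq: "rcolumn n a = {a} \<times> {..<n}" by (auto simp: rcolumn_def)
lemma row_eq: "rrow m u = {..<m} \<times> {u}" by (auto simp: rrow_def)

lemma card_small:
  assumes "finite A" "\<not> 2 \<le> card A"
  shows "A = {} \<or> (\<exists>z. A = {z})"
proof -
  have "card A = 0 \<or> card A = 1" using assms(2) by linarith
  then show ?thesis using assms(1) card_1_singletonE by (metis card_0_eq)
qed

theorem mainTheorem11:
  fixes m n :: nat and S :: "(nat \<times> nat) set"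
  assumes "m \<ge> 2" and "n \<ge> 2"
    and "two_resolving m n S"
  shows "(\<exists>v\<in>rV m n. {v} \<union> (rV m n - rnbhd m n v) \<subseteq> S)
    \<or> ((\<forall>a<m. card (S \<inter> rcolumn n a) \<ge> 2)
       \<and> (\<forall>u<n. card (S \<inter> rrow m u) \<ge> 2)
       \<and> (\<forall>a<m. \<forall>b<m. \<forall>u<n. \<forall>v<n. a \<noteq> b \<and> u \<noteq> v \<longrightarrow>
            S \<inter> {(a, v), (a, u), (b, v), (b, u)} \<noteq> {}))"
proof (cases "\<exists>v\<in>rV m n. {v} \<union> (rV m n - rnbhd m n v) \<subseteq> S")
  case True
  then show ?thesis by blast
next
  case False
  note n1 = False
  have SV: "S \<subseteq> rV m n" using assms(3) unfolding two_resolving_def by simp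
  have quad: "\<forall>a<m. \<forall>b<m. \<forall>u<n. \<forall>v<n. a \<noteq> b \<and> u \<noteq> v \<longrightarrow>
            S \<inter> {(a, v), (a, u), (b, v), (b, u)} \<noteq> {}"
  proof (intro allI impI)
    fix a b u v assume h: "a < m" "b < m" "u < n" "v < n" "a \<noteq> b \<and> u \<noteq> v"
    show "S \<inter> {(a, v), (a, u), (b, v), (b, u)} \<noteq> {}"
    proof
      assume E: "S \<inter> {(a, v), (a, u), (b, v), (b, u)} = {}"
      have inV: "(a,v) \<in> rV m n" "(a,u) \<in> rV m n" "(b,v) \<in> rV m n" "(b,u) \<in> rV m n"
        using h by (auto simp: rV_def)
      obtain s where s: "s \<in> S" "s \<in> rV m n"
        "rsetdist m n s {(a,v),(b,u)} \<noteq> rsetdist m n s {(a,u),(b,v)}"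
        using use_res[OF assms(3), of "{(a,v),(b,u)}" "{(a,u),(b,v)}"] inV h
        by (auto simp: doubleton_eq_iff card_insert_if)
      obtain p q where pq: "s = (p, q)" by fastforce
      show False using s(3) E s(1) h
        unfolding sd2[OF s(2) inV(1) inV(4)] sd2[OF s(2) inV(2) inV(3)]
        by (auto simp: dd_simp pq min_def split: if_splits)
    qed
  qed
  have cols: "\<forall>a<m. card (S \<inter> rcolumn n a) \<ge> 2"
  proof (intro allI impI)
    fix a assume a: "a < m"
    show "card (S \<inter> rcolumn n a) \<ge> 2"
    proof (rule ccontr)
      assume c: "\<not> card (S \<inter> rcolumn n a) \<ge> 2"
      have "finite (S \<inter> rcolumn n a)" by (simp add: col_eq)
      then have "S \<inter> rcolumn n a = {} \<or> (\<exists>z. S \<inter> rcolumn n a = {z})"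
        using card_small c by blast
      then show False
      proof
        assume E: "S \<inter> rcolumn n a = {}"
        define b where "b = (if a = 0 then 1 else 0::nat)"
        have b: "b < m" "b \<noteq> a" using assms(1) a by (auto simp: b_def)
        have inV: "(b,0) \<in> rV m n" "(a,0) \<in> rV m n" using a b assms(2) by (auto simp: rV_def)
        obtain s where s: "s \<in> S" "s \<in> rV m n"
          "rsetdist m n s {(b,0)} \<noteq> rsetdist m n s {(b,0),(a,0)}"
          using use_res[OF assms(3), of "{(b,0)}" "{(b,0),(a,0)}"] inV b
          by (auto simp: card_insert_if)
        obtain p q where pq: "s = (p, q)" by fastforce
        have "p \<noteq> a" using E s(1,2) pq by (auto simp: col_eq rV_def)
        then show False using s(3)
          unfolding sd1[OF s(2) inV(1)] sd2[OF s(2) inV(1) inV(2)]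
          by (auto simp: dd_simp pq min_def split: if_splits)
      next
        assume "\<exists>z. S \<inter> rcolumn n a = {z}"
        then obtain z where Z: "S \<inter> rcolumn n a = {z}" by blast
        define u0 where "u0 = snd z"
        have "z \<in> rcolumn n a" using Z by blast
        then have "z = (a, u0)" by (auto simp: col_eq u0_def)
        then have E: "S \<inter> rcolumn n a = {(a,u0)}" using Z by simp
        then have u0: "u0 < n" "(a,u0) \<in> S" by (auto simp: col_eq)
        have v: "(a,u0) \<in> rV m n" using a u0 by (simp add: rV_def)
        then have "\<not> ({(a,u0)} \<union> (rV m n - rnbhd m n (a,u0)) \<subseteq> S)" using n1 by blast
        then obtain c w where cw: "(c,w) \<in> rV m n" "\<not> radj m n (a,u0) (c,w)" "(c,w) \<notin> S"
          using u0 by (auto simp: rnbhd_def)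
        have cw2: "c \<noteq> a" "w \<noteq> u0" "c < m" "w < n"
          using cw v u0 by (auto simp: radj_def rV_def)
        have inV: "(a,w) \<in> rV m n" "(c,u0) \<in> rV m n" "(c,w) \<in> rV m n"
          using a cw2 u0 by (auto simp: rV_def)
        obtain s where s: "s \<in> S" "s \<in> rV m n"
          "rsetdist m n s {(a,w),(c,u0)} \<noteq> rsetdist m n s {(c,u0),(c,w)}"
          using use_res[OF assms(3), of "{(a,w),(c,u0)}" "{(c,u0),(c,w)}"] inV cw2
          by (auto simp: doubleton_eq_iff card_insert_if)
        obtain p q where pq: "s = (p, q)" by fastforce
        have "p = a \<longrightarrow> q = u0" using E s(1,2) pq by (auto simp: col_eq rV_def)
        then show False using s(3) cw(3) s(1) cw2
          unfolding sd2[OF s(2) inV(1) inV(2)] sd2[OF s(2) inV(2) inV(3)]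
          by (auto simp: dd_simp pq min_def split: if_splits)
      qed
    qed
  qed
  have rows: "\<forall>u<n. card (S \<inter> rrow m u) \<ge> 2"
  proof (intro allI impI)
    fix a assume a: "a < n"
    show "card (S \<inter> rrow m a) \<ge> 2"
    proof (rule ccontr)
      assume c: "\<not> card (S \<inter> rrow m a) \<ge> 2"
      have "finite (S \<inter> rrow m a)" by (simp add: row_eq)
      then have "S \<inter> rrow m a = {} \<or> (\<exists>z. S \<inter> rrow m a = {z})"
        using card_small c by blast
      then show False
      proof
        assume E: "S \<inter> rrow m a = {}"
        define b where "b = (if a = 0 then 1 else 0::nat)"
        have b: "b < n" "b \<noteq> a" using assms(2) a by (auto simp: b_def)
        have inV: "(0,b) \<in> rV m n" "(0,a) \<in> rV m n" using a b assms(1) by (auto simp: rV_def)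
        obtain s where s: "s \<in> S" "s \<in> rV m n"
          "rsetdist m n s {(0,b)} \<noteq> rsetdist m n s {(0,b),(0,a)}"
          using use_res[OF assms(3), of "{(0,b)}" "{(0,b),(0,a)}"] inV b
          by (auto simp: card_insert_if)
        obtain p q where pq: "s = (p, q)" by fastforce
        have "q \<noteq> a" using E s(1,2) pq by (auto simp: row_eq rV_def)
        then show False using s(3)
          unfolding sd1[OF s(2) inV(1)] sd2[OF s(2) inV(1) inV(2)]
          by (auto simp: dd_simp pq min_def split: if_splits)
      next
        assume "\<exists>z. S \<inter> rrow m a = {z}"
        then obtain z where Z: "S \<inter> rrow m a = {z}" by blast
        define u0 where "u0 = fst z"
        have "z \<in> rrow m a" using Z by blast
        then have "z = (u0, a)" by (auto simp: row_eq u0_def)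
        then have E: "S \<inter> rrow m a = {(u0,a)}" using Z by simp
        then have u0: "u0 < m" "(u0,a) \<in> S" by (auto simp: row_eq)
        have v: "(u0,a) \<in> rV m n" using a u0 by (simp add: rV_def)
        then have "\<not> ({(u0,a)} \<union> (rV m n - rnbhd m n (u0,a)) \<subseteq> S)" using n1 by blast
        then obtain c w where cw: "(c,w) \<in> rV m n" "\<not> radj m n (u0,a) (c,w)" "(c,w) \<notin> S"
          using u0 by (auto simp: rnbhd_def)
        have cw2: "c \<noteq> u0" "w \<noteq> a" "c < m" "w < n"
          using cw v u0 by (auto simp: radj_def rV_def)
        have inV: "(c,a) \<in> rV m n" "(u0,w) \<in> rV m n" "(c,w) \<in> rV m n"
          using a cw2 u0 by (auto simp: rV_def)
        obtain s where s: "s \<in> S" "s \<in> rV m n"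
          "rsetdist m n s {(c,a),(u0,w)} \<noteq> rsetdist m n s {(u0,w),(c,w)}"
          using use_res[OF assms(3), of "{(c,a),(u0,w)}" "{(u0,w),(c,w)}"] inV cw2
          by (auto simp: doubleton_eq_iff card_insert_if)
        obtain p q where pq: "s = (p, q)" by fastforce
        have "q = a \<longrightarrow> p = u0" using E s(1,2) pq by (auto simp: row_eq rV_def)
        then show False using s(3) cw(3) s(1) cw2
          unfolding sd2[OF s(2) inV(1) inV(2)] sd2[OF s(2) inV(2) inV(3)]
          by (auto simp: dd_simp pq min_def split: if_splits)
      qed
    qed
  qed
  show ?thesis
    using cols rows quad by blast
qed

end
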